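(* Let $\ell\in\mathcal{D}^-[0,\infty)$, $r\in\mathcal{D}^+[0,\infty)$ with $\ell\le r$. Given any $\psi\in\mathcal{D}[0,\infty)$, there exists at most one $\phi\in\mathcal{D}[0,\infty)$ such that $(\phi,\phi-\psi)$ solves the ESP on $[\ell(\cdot),r(\cdot)]$ for $\psi$.
   Context: $\mathcal{D}[0,\infty)$ denotes the càdlàg functions $[0,\infty)\to(-\infty,\infty)$; $\mathcal{D}^-[0,\infty)$ (resp. $\mathcal{D}^+[0,\infty)$) denotes càdlàg functions with values in $[-\infty,\infty)$ (resp. $(-\infty,\infty]$). ESP: $(\phi,\eta)\in\mathcal{D}[0,\infty)^2$ solves the ESP on $[\ell(\cdot),r(\cdot)]$ for $\psi$ if (1) $\phi(t)=\psi(t)+\eta(t)\in[\ell(t),r(t)]$ for all $t\ge0$; (2) for all $0\le s\le t$: $\eta(t)-\eta(s)\ge0$ if $\phi(u)<r(u)$ for all $u\in(s,t]$, and $\eta(t)-\eta(s)\le0$ if $\phi(u)>\ell(u)$ for all $u\in(s,t]$; (3) for all $t\ge0$: $\eta(t)-\eta(t-)\ge0$ if $\phi(t)<r(t)$, and $\eta(t)-\eta(t-)\le0$ if $\phi(t)>\ell(t)$, where $\eta(0-)=0$. *)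

theory Defs
  imports "HOL-Analysis.Analysis" "HOL-Library.Extended_Real"
begin

text \<open>Cadlag on [0,oo): right-continuous at every t >= 0, left limit exists at every t > 0.
  Values outside [0,oo) are irrelevant.\<close>
definition cadlag :: "(real \<Rightarrow> 'a::topological_space) \<Rightarrow> bool" where
  "cadlag f \<longleftrightarrow> (\<forall>t\<ge>0. continuous (at_right t) f \<and> (t > 0 \<longrightarrow> (\<exists>L. (f \<longlongrightarrow> L) (at_left t))))"

definition D :: "(real \<Rightarrow> real) set" where
  "D = {f. cadlag f}"

definition Dminus :: "(real \<Rightarrow> ereal) set" where
  "Dminus = {f. cadlag f \<and> (\<forall>t\<ge>0. f t \<noteq> \<infinity>)}"

definition Dplus :: "(real \<Rightarrow> ereal) set" where
  "Dplus = {f. cadlag f \<and> (\<forall>t\<ge>0. f t \<noteq> -\<infinity>)}"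

text \<open>Left limit eta(t-), with the convention eta(0-) = 0.\<close>
definition left_lim :: "(real \<Rightarrow> real) \<Rightarrow> real \<Rightarrow> real" where
  "left_lim \<eta> t = (if t = 0 then 0 else Lim (at_left t) \<eta>)"

definition ESP :: "(real \<Rightarrow> ereal) \<Rightarrow> (real \<Rightarrow> ereal) \<Rightarrow> (real \<Rightarrow> real)
    \<Rightarrow> (real \<Rightarrow> real) \<Rightarrow> (real \<Rightarrow> real) \<Rightarrow> bool" where
  "ESP l r \<psi> \<phi> \<eta> \<longleftrightarrow>
     \<phi> \<in> D \<and> \<eta> \<in> D \<and>
     (\<forall>t\<ge>0. \<phi> t = \<psi> t + \<eta> t \<and> l t \<le> ereal (\<phi> t) \<and> ereal (\<phi> t) \<le> r t) \<and>
     (\<forall>s t. 0 \<le> s \<and> s \<le> t \<longrightarrow>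
        ((\<forall>u\<in>{s<..t}. ereal (\<phi> u) < r u) \<longrightarrow> \<eta> t - \<eta> s \<ge> 0) \<and>
        ((\<forall>u\<in>{s<..t}. ereal (\<phi> u) > l u) \<longrightarrow> \<eta> t - \<eta> s \<le> 0)) \<and>
     (\<forall>t\<ge>0.
        (ereal (\<phi> t) < r t \<longrightarrow> \<eta> t - left_lim \<eta> t \<ge> 0) \<and>
        (ereal (\<phi> t) > l t \<longrightarrow> \<eta> t - left_lim \<eta> t \<le> 0))"

end

theory Submission
  imports Defs
begin

lemma key:
  fixes l r :: "real \<Rightarrow> ereal" and \<psi> \<phi>1 \<phi>2 :: "real \<Rightarrow> real"
  assumes E1: "ESP l r \<psi> \<phi>1 (\<lambda>t. \<phi>1 t - \<psi> t)"
    and E2: "ESP l r \<psi> \<phi>2 (\<lambda>t. \<phi>2 t - \<psi> t)"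
    and T0: "0 \<le> T"
  shows "\<phi>1 T \<le> \<phi>2 T"
proof (rule ccontr)
  assume neg: "\<not> \<phi>1 T \<le> \<phi>2 T"
  define \<eta>1 where "\<eta>1 = (\<lambda>t. \<phi>1 t - \<psi> t)"
  define \<eta>2 where "\<eta>2 = (\<lambda>t. \<phi>2 t - \<psi> t)"
  note e1 = E1[unfolded ESP_def, folded \<eta>1_def]
  note e2 = E2[unfolded ESP_def, folded \<eta>2_def]
  have bnd1: "\<And>t. t \<ge> 0 \<Longrightarrow> l t \<le> ereal (\<phi>1 t) \<and> ereal (\<phi>1 t) \<le> r t" using e1 by blast
  have bnd2: "\<And>t. t \<ge> 0 \<Longrightarrow> l t \<le> ereal (\<phi>2 t) \<and> ereal (\<phi>2 t) \<le> r t" using e2 by blast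
  have gt: "\<And>u. u \<ge> 0 \<Longrightarrow> \<phi>1 u > \<phi>2 u \<Longrightarrow> ereal (\<phi>1 u) > l u \<and> ereal (\<phi>2 u) < r u"
  proof -
    fix u :: real assume "u \<ge> 0" "\<phi>1 u > \<phi>2 u"
    then have "ereal (\<phi>2 u) < ereal (\<phi>1 u)" by simp
    then show "ereal (\<phi>1 u) > l u \<and> ereal (\<phi>2 u) < r u"
      using bnd1[OF \<open>u \<ge> 0\<close>] bnd2[OF \<open>u \<ge> 0\<close>] by (meson order_le_less_trans order_less_le_trans)
  qed
  define A where "A = {s. 0 \<le> s \<and> s \<le> T \<and> (\<forall>u\<in>{s<..T}. \<phi>1 u > \<phi>2 u)}"
  define s where "s = Inf A"
  have TA: "T \<in> A" using T0 unfolding A_def by auto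
  have bdd: "bdd_below A" unfolding A_def by (rule bdd_belowI[of _ 0]) auto
  have s0: "0 \<le> s" unfolding s_def using TA by (intro cInf_greatest) (auto simp: A_def)
  have sT: "s \<le> T" unfolding s_def using TA bdd by (rule cInf_lower)
  have pos: "\<forall>u\<in>{s<..T}. \<phi>1 u > \<phi>2 u"
  proof
    fix u assume u: "u \<in> {s<..T}"
    then have "Inf A < u" by (simp add: s_def)
    then obtain a where "a \<in> A" "a < u" using cInf_lessD[of A u] TA by blast
    then show "\<phi>1 u > \<phi>2 u" using u unfolding A_def by auto
  qed
  have gs: "\<forall>u\<in>{s<..T}. ereal (\<phi>1 u) > l u \<and> ereal (\<phi>2 u) < r u"
    using pos gt s0 by auto
  have C1: "(\<forall>u\<in>{s<..T}. ereal (\<phi>1 u) > l u) \<longrightarrow> \<eta>1 T - \<eta>1 s \<le> 0"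
    using conjunct2[OF mp[OF spec[of _ T, OF spec[of _ s, OF conjunct1[OF conjunct2[OF conjunct2[OF conjunct2[OF e1]]]]]]]] s0 sT unfolding \<eta>1_def by simp
  have c2a: "\<eta>1 T - \<eta>1 s \<le> 0" using C1 gs by blast
  have C2: "(\<forall>u\<in>{s<..T}. ereal (\<phi>2 u) < r u) \<longrightarrow> \<eta>2 T - \<eta>2 s \<ge> 0"
    using conjunct1[OF mp[OF spec[of _ T, OF spec[of _ s, OF conjunct1[OF conjunct2[OF conjunct2[OF conjunct2[OF e2]]]]]]]] s0 sT unfolding \<eta>2_def by simp
  have c2b: "\<eta>2 T - \<eta>2 s \<ge> 0" using C2 gs by blast
  have spos: "\<phi>1 s > \<phi>2 s" using c2a c2b neg unfolding \<eta>1_def \<eta>2_def by linarith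
  have g: "ereal (\<phi>1 s) > l s \<and> ereal (\<phi>2 s) < r s" using gt[OF s0 spos] .
  have j1: "\<eta>1 s - left_lim \<eta>1 s \<le> 0" using conjunct2[OF conjunct2[OF conjunct2[OF conjunct2[OF e1]]]] s0 g by (auto simp: \<eta>1_def)
  have j2: "\<eta>2 s - left_lim \<eta>2 s \<ge> 0" using conjunct2[OF conjunct2[OF conjunct2[OF conjunct2[OF e2]]]] s0 g by (auto simp: \<eta>2_def)
  show False
  proof (cases "s = 0")
    case True
    then show False using j1 j2 spos unfolding left_lim_def \<eta>1_def \<eta>2_def by simp
  next
    case False
    with s0 have sp: "s > 0" by simp
    obtain L1 where L1: "(\<eta>1 \<longlongrightarrow> L1) (at_left s)"
      using e1 s0 sp unfolding D_def cadlag_def by blast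
    obtain L2 where L2: "(\<eta>2 \<longlongrightarrow> L2) (at_left s)"
      using e2 s0 sp unfolding D_def cadlag_def by blast
    have ll1: "left_lim \<eta>1 s = L1" using False L1 unfolding left_lim_def
      by (simp add: tendsto_Lim)
    have ll2: "left_lim \<eta>2 s = L2" using False L2 unfolding left_lim_def
      by (simp add: tendsto_Lim)
    have Lpos: "L1 - L2 > 0" using j1 j2 spos ll1 ll2 unfolding \<eta>1_def \<eta>2_def by simp
    have "((\<lambda>u. \<eta>1 u - \<eta>2 u) \<longlongrightarrow> L1 - L2) (at_left s)" using L1 L2 by (rule tendsto_diff)
    then have "eventually (\<lambda>u. \<eta>1 u - \<eta>2 u > 0) (at_left s)" using Lpos by (rule order_tendstoD)
    then obtain b where b: "b < s" "\<forall>y>b. y < s \<longrightarrow> \<eta>1 y - \<eta>2 y > 0"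
      unfolding eventually_at_left_field by blast
    define s' where "s' = max b 0"
    have s's: "s' < s" using b sp by (simp add: s'_def)
    have "s' \<notin> A"
    proof
      assume "s' \<in> A"
      then have "s \<le> s'" unfolding s_def using bdd by (rule cInf_lower)
      then show False using s's by simp
    qed
    then obtain u where u: "u \<in> {s'<..T}" "\<not> \<phi>1 u > \<phi>2 u"
      using s's sT unfolding A_def s'_def by auto
    have "u \<le> s" using pos u by force
    moreover have "u \<noteq> s" using u spos by auto
    ultimately have "u < s" by simp
    moreover have "u > b" using u by (simp add: s'_def)
    ultimately have "\<eta>1 u - \<eta>2 u > 0" using b by blast
    then show False using u unfolding \<eta>1_def \<eta>2_def by simp
  qed
qed

theorem proposition2p8:
  fixes l r :: "real \<Rightarrow> ereal" and \<psi> \<phi>1 \<phi>2 :: "real \<Rightarrow> real"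
  assumes "l \<in> Dminus" and "r \<in> Dplus" and "\<forall>t\<ge>0. l t \<le> r t"
    and "\<psi> \<in> D"
    and "\<phi>1 \<in> D" and "ESP l r \<psi> \<phi>1 (\<lambda>t. \<phi>1 t - \<psi> t)"
    and "\<phi>2 \<in> D" and "ESP l r \<psi> \<phi>2 (\<lambda>t. \<phi>2 t - \<psi> t)"
  shows "\<forall>t\<ge>0. \<phi>1 t = \<phi>2 t"
  using key[OF assms(6) assms(8)] key[OF assms(8) assms(6)] by (meson order_antisym)

end
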